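(* Let $x_i,x_j:[0,\infty)\to\mathbb{S}^2$ and $v_i,v_j:[0,\infty)\to\mathbb{R}^3$, with $v_i$ and $v_j$ uniformly bounded in time. For $k>0$ let $$f_k(t):=\|x_i(t)+x_j(t)\|\,\big\|R(x_j(t),x_i(t))v_j(t)-v_i(t)\big\|^k,$$ with $f_k(t):=0$ whenever $x_i(t)=-x_j(t)$. Then the conditions $\lim_{t\to\infty}f_k(t)=0$ are equivalent for all $k>0$ (i.e. if it holds for one $k>0$, it holds for every $k>0$).
   Context: $\mathbb{S}^2$ is the unit sphere in $\mathbb{R}^3$ and $\|\cdot\|$ the Euclidean norm. For column vectors $x_1,x_2\in\mathbb{S}^2$ with $x_1\ne-x_2$, $R(x_1,x_2)=I$ if $x_1=x_2$, and otherwise $$R(x_1,x_2)=\langle x_1,x_2\rangle I-x_1x_2^T+x_2x_1^T+(1-\langle x_1,x_2\rangle)\Big(\frac{x_1\times x_2}{\|x_1\times x_2\|}\Big)\Big(\frac{x_1\times x_2}{\|x_1\times x_2\|}\Big)^T.$$ *)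

theory Defs
  imports "HOL-Analysis.Analysis"
begin

definition outer3 :: "real^3 \<Rightarrow> real^3 \<Rightarrow> real^3^3" where
  "outer3 a b = (\<chi> i j. a $ i * b $ j)"

text \<open>The rotation R(x1,x2) of the paper (only meaningful for x1 \<noteq> -x2).\<close>
definition Rot :: "real^3 \<Rightarrow> real^3 \<Rightarrow> real^3^3" where
  "Rot x1 x2 = (if x1 = x2 then mat 1 else
     (x1 \<bullet> x2) *\<^sub>R mat 1 - outer3 x1 x2 + outer3 x2 x1
     + (1 - x1 \<bullet> x2) *\<^sub>R outer3 (cross3 x1 x2 /\<^sub>R norm (cross3 x1 x2))
                                    (cross3 x1 x2 /\<^sub>R norm (cross3 x1 x2)))"

definition fk :: "real \<Rightarrow> (real \<Rightarrow> real^3) \<Rightarrow> (real \<Rightarrow> real^3) \<Rightarrow> (real \<Rightarrow> real^3)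
                  \<Rightarrow> (real \<Rightarrow> real^3) \<Rightarrow> real \<Rightarrow> real" where
  "fk k xi xj vi vj t = (if xi t = - xj t then 0 else
     norm (xi t + xj t) * norm (Rot (xj t) (xi t) *v vj t - vi t) powr k)"

end

theory Submission
  imports Defs
begin

lemma outer3_mult: "outer3 a b *v v = (b \<bullet> v) *\<^sub>R a"
  by (simp add: vec_eq_iff matrix_vector_mult_def outer3_def inner_vec_def
      sum_distrib_left mult.commute mult.left_commute)

lemma Rot_bound:
  assumes "norm x1 = 1" "norm x2 = 1"
  shows "norm (Rot x1 x2 *v v) \<le> 5 * norm v"
proof (cases "x1 = x2")
  case True then show ?thesis by (simp add: Rot_def)
next
  case False
  define c where "c = cross3 x1 x2 /\<^sub>R norm (cross3 x1 x2)"
  have nc: "norm c \<le> 1" unfolding c_def by (cases "cross3 x1 x2 = 0") auto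
  have d1: "\<bar>x1 \<bullet> x2\<bar> \<le> 1" using Cauchy_Schwarz_ineq2[of x1 x2] assms by simp
  have eq: "Rot x1 x2 *v v = (x1 \<bullet> x2) *\<^sub>R v - (x2 \<bullet> v) *\<^sub>R x1 + (x1 \<bullet> v) *\<^sub>R x2
      + (1 - x1 \<bullet> x2) *\<^sub>R ((c \<bullet> v) *\<^sub>R c)"
    using False unfolding Rot_def c_def[symmetric]
    by (simp add: matrix_vector_mult_add_rdistrib matrix_vector_mult_diff_rdistrib
        scaleR_matrix_vector_assoc[symmetric] outer3_mult)
  have n1: "norm ((x1 \<bullet> x2) *\<^sub>R v) \<le> norm v"
    using d1 by (simp add: mult_left_le_one_le)
  have n2: "norm ((x2 \<bullet> v) *\<^sub>R x1) \<le> norm v"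
    using Cauchy_Schwarz_ineq2[of x2 v] assms by simp
  have n3: "norm ((x1 \<bullet> v) *\<^sub>R x2) \<le> norm v"
    using Cauchy_Schwarz_ineq2[of x1 v] assms by simp
  have cv: "\<bar>c \<bullet> v\<bar> * norm c \<le> norm v"
  proof -
    have "\<bar>c \<bullet> v\<bar> * norm c \<le> norm c * norm v * norm c"
      using Cauchy_Schwarz_ineq2[of c v] by (simp add: mult_right_mono)
    also have "\<dots> \<le> norm v"
    proof -
      have "norm c * norm c \<le> 1" using nc by (simp add: mult_le_one)
      then have "(norm c * norm c) * norm v \<le> 1 * norm v" by (intro mult_right_mono) auto
      then show ?thesis by (simp add: algebra_simps)
    qed
    finally show ?thesis .
  qed
  have n4: "norm ((1 - x1 \<bullet> x2) *\<^sub>R ((c \<bullet> v) *\<^sub>R c)) \<le> 2 * norm v"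
  proof -
    have "norm ((1 - x1 \<bullet> x2) *\<^sub>R ((c \<bullet> v) *\<^sub>R c)) = \<bar>1 - x1 \<bullet> x2\<bar> * (\<bar>c \<bullet> v\<bar> * norm c)"
      by (simp add: abs_mult)
    also have "\<dots> \<le> 2 * norm v"
      using d1 cv by (intro mult_mono) auto
    finally show ?thesis .
  qed
  show ?thesis unfolding eq
    using n1 n2 n3 n4 norm_triangle_ineq[of "(x1 \<bullet> x2) *\<^sub>R v - (x2 \<bullet> v) *\<^sub>R x1 + (x1 \<bullet> v) *\<^sub>R x2"
        "(1 - x1 \<bullet> x2) *\<^sub>R ((c \<bullet> v) *\<^sub>R c)"]
      norm_triangle_ineq[of "(x1 \<bullet> x2) *\<^sub>R v - (x2 \<bullet> v) *\<^sub>R x1" "(x1 \<bullet> v) *\<^sub>R x2"]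
      norm_triangle_ineq4[of "(x1 \<bullet> x2) *\<^sub>R v" "(x2 \<bullet> v) *\<^sub>R x1"]
    by linarith
qed

lemma powr_transfer:
  fixes a b :: "real \<Rightarrow> real"
  assumes a0: "\<And>t. 0 \<le> a t" and b0: "\<And>t. 0 \<le> b t"
    and aB: "eventually (\<lambda>t. a t \<le> 2) F" and bB: "eventually (\<lambda>t. b t \<le> M) F"
    and k: "k > 0" and l: "l > 0"
    and lim: "((\<lambda>t. a t * b t powr k) \<longlongrightarrow> 0) F"
  shows "((\<lambda>t. a t * b t powr l) \<longlongrightarrow> 0) F"
proof (cases "k \<le> l")
  case True
  have "eventually (\<lambda>t. norm (a t * b t powr l) \<le> (a t * b t powr k) * M powr (l - k)) F"
    using bB
  proof eventually_elim
    case (elim t)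
    have "b t powr l = b t powr k * b t powr (l - k)"
      using b0[of t] by (cases "b t = 0") (use k True in \<open>auto simp: powr_add[symmetric]\<close>)
    moreover have "b t powr (l - k) \<le> M powr (l - k)"
      using elim b0[of t] True by (intro powr_mono2) auto
    ultimately show ?case using a0[of t] b0[of t]
      by (simp add: mult_left_mono mult.assoc)
  qed
  moreover have "((\<lambda>t. (a t * b t powr k) * M powr (l - k)) \<longlongrightarrow> 0) F"
    using tendsto_mult_left_zero[OF lim] by simp
  ultimately show ?thesis by (rule Lim_null_comparison)
next
  case False
  have "eventually (\<lambda>t. norm (a t * b t powr l) \<le> 2 powr (1 - l/k) * (a t * b t powr k) powr (l/k)) F"
    using aB
  proof eventually_elim
    case (elim t)
    show ?case
    proof (cases "a t = 0")
      case True then show ?thesis by simp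
    next
      case nz: False
      then have ap: "a t > 0" using a0[of t] by linarith
      have e1: "(a t * b t powr k) powr (l/k) = a t powr (l/k) * b t powr l"
        using ap b0[of t] k by (simp add: powr_mult powr_powr)
      have e2: "a t = a t powr (1 - l/k) * a t powr (l/k)"
        using ap by (simp add: powr_add[symmetric])
      have "a t powr (1 - l/k) \<le> 2 powr (1 - l/k)"
        using elim ap False k by (intro powr_mono2) (auto simp: field_simps)
      then have "a t powr (1 - l/k) * (a t powr (l/k) * b t powr l)
          \<le> 2 powr (1 - l/k) * (a t powr (l/k) * b t powr l)"
        by (intro mult_right_mono) auto
      moreover have "norm (a t * b t powr l) = a t powr (1 - l/k) * (a t powr (l/k) * b t powr l)"
        using ap by (subst e2) (simp add: mult.assoc)
      ultimately show ?thesis using e1 by simp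
    qed
  qed
  moreover have "((\<lambda>t. 2 powr (1 - l/k) * (a t * b t powr k) powr (l/k)) \<longlongrightarrow> 0) F"
  proof -
    have "((\<lambda>t. (a t * b t powr k) powr (l/k)) \<longlongrightarrow> 0) F"
      by (rule tendsto_zero_powrI[OF lim, where b="l/k"]) (use a0 b0 k l in auto)
    from tendsto_mult_right_zero[OF this] show ?thesis .
  qed
  ultimately show ?thesis by (rule Lim_null_comparison)
qed

theorem lemmaC1:
  fixes xi xj vi vj :: "real \<Rightarrow> real^3"
  assumes "\<forall>t\<ge>0. norm (xi t) = 1" and "\<forall>t\<ge>0. norm (xj t) = 1"
    and "\<exists>B. \<forall>t\<ge>0. norm (vi t) \<le> B" and "\<exists>B. \<forall>t\<ge>0. norm (vj t) \<le> B"
  shows "\<forall>k>0. \<forall>l>0. ((fk k xi xj vi vj \<longlongrightarrow> 0) at_top) \<longleftrightarrow> ((fk l xi xj vi vj \<longlongrightarrow> 0) at_top)"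
proof -
  obtain B1 where B1: "\<forall>t\<ge>0. norm (vi t) \<le> B1" using assms(3) by blast
  obtain B2 where B2: "\<forall>t\<ge>0. norm (vj t) \<le> B2" using assms(4) by blast
  define a where "a t = norm (xi t + xj t)" for t
  define b where "b t = norm (Rot (xj t) (xi t) *v vj t - vi t)" for t
  have fe: "fk k xi xj vi vj = (\<lambda>t. a t * b t powr k)" for k
    by (auto simp: fun_eq_iff fk_def a_def b_def)
  have aB: "eventually (\<lambda>t. a t \<le> 2) at_top"
    using eventually_ge_at_top[of "0::real"]
  proof eventually_elim
    case (elim t)
    then show ?case using assms(1,2) norm_triangle_ineq[of "xi t" "xj t"] unfolding a_def by auto
  qed
  have bB: "eventually (\<lambda>t. b t \<le> 5 * B2 + B1) at_top"
    using eventually_ge_at_top[of "0::real"]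
  proof eventually_elim
    case (elim t)
    have "norm (Rot (xj t) (xi t) *v vj t) \<le> 5 * norm (vj t)"
      using assms(1,2) elim by (intro Rot_bound) auto
    then show ?case using B1 B2 elim norm_triangle_ineq4[of "Rot (xj t) (xi t) *v vj t" "vi t"]
      unfolding b_def by force
  qed
  have a0: "\<And>t. 0 \<le> a t" and b0: "\<And>t. 0 \<le> b t" by (auto simp: a_def b_def)
  show ?thesis unfolding fe
    using powr_transfer[OF a0 b0 aB bB] by blast
qed

end
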